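(* Fix constants $c > 0$ and $c' > 0$ and consider RLS-GP with $F = \{\mathrm{AND}, \mathrm{OR}\}$, $L = \{x_1, \ldots, x_n\}$, tree size limit $\ell \ge n$, target $h \in \{\mathrm{AND}_n, \mathrm{OR}_n\}$, evaluating solutions in each iteration on a fresh training set of $s \ge n^{c} \lg^2 n$ inputs sampled uniformly at random from $\{0,1\}^n$, and terminating when the sampled error of its current solution is at most $c' \lg n$. Then, with high probability, within any polynomial number of iterations no solution with a generalisation error greater than $n^{-c}$ has a sampled error of at most $c' \lg n$ on the training set of that iteration.
   Context: Programs are finite rooted binary trees (the empty tree is allowed) whose internal nodes are labelled by binary Boolean functions from $F$ and whose leaves are labelled by literals from $L$; a program computes a Boolean function of $(x_1,\dots,x_n)$ in the obvious way. $\mathrm{AND}_n(x) = x_1 \wedge \dots \wedge x_n$, $\mathrm{OR}_n(x) = x_1 \vee \dots \vee x_n$. The generalisation error of $X$ is $|\{x \in \{0,1\}^n : X(x) \ne h(x)\}|/2^n$. In each iteration a fresh training set of $s$ inputs is drawn independently and uniformly at random from $\{0,1\}^n$; the sampled error $f(X)$ of a program $X$ in that iteration is the number of sampled inputs on which $X$ differs from $h$; parent and offspring are evaluated on the same training set. LeafCount$(X)$ is the number of leaves. HVL-Prime with subtree deletion, applied to a tree $X$: choose $op \in \{\mathrm{INS}, \mathrm{DEL}, \mathrm{SUB}\}$, a literal $l \in L$ and a function $g \in F$, independently and uniformly at random. If $X$ is empty, the result is the single leaf $l$. Otherwise: if $op = \mathrm{INS}$, choose a node $x$ of $X$ uniformly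 at random and replace it by a new node labelled $g$ whose two children are the subtree rooted at $x$ and a new leaf $l$, in uniformly random order; if $op = \mathrm{DEL}$, choose a node $x$ of $X$ (leaf or internal) uniformly at random and replace the parent of $x$ by the sibling of $x$; if $op = \mathrm{SUB}$, choose a leaf of $X$ uniformly at random and replace it by $l$. RLS-GP with tree size limit $\ell$: start with the empty tree $X$; in each iteration let $X' := $ HVL-Prime$(X)$, and if LeafCount$(X') \le \ell$ and $f(X') \le f(X)$ then set $X := X'$. $\lg$ is the base-2 logarithm; "with high probability" means with probability tending to $1$ as $n \to \infty$. *)

theory Defs
  imports "HOL-Probability.Probability"
begin

text \<open>Function set F = {AND, OR}; literal set L = {x_1,...,x_n}, where literal x_(i+1)
  is represented by the leaf label i (0 <= i < n). A program is either empty (None)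
  or a nonempty tree (Some t).\<close>

datatype func = AND | OR

datatype tree = Lf nat | Nd func tree tree

type_synonym program = "tree option"

type_synonym input = "bool list"

fun apply_func :: "func \<Rightarrow> bool \<Rightarrow> bool \<Rightarrow> bool" where
  "apply_func AND a b = (a \<and> b)"
| "apply_func OR a b = (a \<or> b)"

fun eval_tree :: "tree \<Rightarrow> input \<Rightarrow> bool" where
  "eval_tree (Lf i) x = x ! i"
| "eval_tree (Nd g l r) x = apply_func g (eval_tree l x) (eval_tree r x)"

text \<open>The empty program computes no Boolean value (None), so it differs from the
  target on every input.\<close>
definition eval_prog :: "program \<Rightarrow> input \<Rightarrow> bool option" where
  "eval_prog X x = map_option (\<lambda>t. eval_tree t x) X"

fun nnodes :: "tree \<Rightarrow> nat" where
  "nnodes (Lf i) = 1"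
| "nnodes (Nd g l r) = 1 + nnodes l + nnodes r"

fun nleaves :: "tree \<Rightarrow> nat" where
  "nleaves (Lf i) = 1"
| "nleaves (Nd g l r) = nleaves l + nleaves r"

definition LeafCount :: "program \<Rightarrow> nat" where
  "LeafCount X = (case X of None \<Rightarrow> 0 | Some t \<Rightarrow> nleaves t)"

definition inputs :: "nat \<Rightarrow> input set" where
  "inputs n = {x. length x = n}"

definition target :: "func \<Rightarrow> nat \<Rightarrow> input \<Rightarrow> bool" where
  "target g n x = (case g of AND \<Rightarrow> (\<forall>i<n. x ! i) | OR \<Rightarrow> (\<exists>i<n. x ! i))"

definition gen_error :: "nat \<Rightarrow> (input \<Rightarrow> bool) \<Rightarrow> program \<Rightarrow> real" where
  "gen_error n h X = real (card {x \<in> inputs n. eval_prog X x \<noteq> Some (h x)}) / 2 ^ n"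

definition sampled_error :: "(input \<Rightarrow> bool) \<Rightarrow> input list \<Rightarrow> program \<Rightarrow> nat" where
  "sampled_error h T X = length (filter (\<lambda>x. eval_prog X x \<noteq> Some (h x)) T)"

text \<open>s inputs drawn independently and uniformly from {0,1}^n: uniform distribution on
  the s-fold product (lists of length s of inputs of length n).\<close>
definition training_set :: "nat \<Rightarrow> nat \<Rightarrow> input list pmf" where
  "training_set n s = pmf_of_set {T. length T = s \<and> (\<forall>x\<in>set T. x \<in> inputs n)}"

text \<open>Nodes are numbered in preorder (0 = root), leaves left to right.\<close>

fun ins_at :: "tree \<Rightarrow> nat \<Rightarrow> (tree \<Rightarrow> tree) \<Rightarrow> tree" where
  "ins_at t 0 f = f t"
| "ins_at (Lf i) (Suc k) f = Lf i"
| "ins_at (Nd g l r) (Suc k) f =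
     (if k < nnodes l then Nd g (ins_at l k f) r else Nd g l (ins_at r (k - nnodes l) f))"

text \<open>Delete the non-root node with preorder index k: its parent is replaced by its sibling.\<close>
fun del_at :: "tree \<Rightarrow> nat \<Rightarrow> tree" where
  "del_at (Lf i) k = Lf i"
| "del_at (Nd g l r) k =
     (if k = 1 then r
      else if k = 1 + nnodes l then l
      else if k - 1 < nnodes l then Nd g (del_at l (k - 1)) r
      else Nd g l (del_at r (k - 1 - nnodes l)))"

text \<open>Choosing the root (which has no parent) deletes the whole tree.\<close>
definition del_prog :: "tree \<Rightarrow> nat \<Rightarrow> program" where
  "del_prog t k = (if k = 0 then None else Some (del_at t k))"

fun sub_at :: "tree \<Rightarrow> nat \<Rightarrow> nat \<Rightarrow> tree" where
  "sub_at (Lf i) k l = Lf l"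
| "sub_at (Nd g a b) k l =
     (if k < nleaves a then Nd g (sub_at a k l) b else Nd g a (sub_at b (k - nleaves a) l))"

datatype mop = INS | DEL | SUB

definition hvl_prime :: "nat \<Rightarrow> program \<Rightarrow> program pmf" where
  "hvl_prime n X =
     do { op \<leftarrow> pmf_of_set {INS, DEL, SUB};
          l \<leftarrow> pmf_of_set {..<n};
          g \<leftarrow> pmf_of_set {AND, OR};
          (case X of
             None \<Rightarrow> return_pmf (Some (Lf l))
           | Some t \<Rightarrow>
              (case op of
                 INS \<Rightarrow> do { k \<leftarrow> pmf_of_set {..<nnodes t};
                             b \<leftarrow> pmf_of_set {True, False};
                             return_pmf (Some (ins_at t k
                               (\<lambda>u. if b then Nd g u (Lf l) else Nd g (Lf l) u))) }
               | DEL \<Rightarrow> do { k \<leftarrow> pmf_of_set {..<nnodes t};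
                             return_pmf (del_prog t k) }
               | SUB \<Rightarrow> do { k \<leftarrow> pmf_of_set {..<nleaves t};
                             return_pmf (Some (sub_at t k l)) })) }"

definition bad_sol :: "real \<Rightarrow> real \<Rightarrow> nat \<Rightarrow> (input \<Rightarrow> bool) \<Rightarrow> input list \<Rightarrow> program \<Rightarrow> bool" where
  "bad_sol c c' n h T X \<longleftrightarrow>
     gen_error n h X > real n powr (- c) \<and> real (sampled_error h T X) \<le> c' * log 2 (real n)"

text \<open>The state is the current solution together with a flag
  recording whether some solution evaluated so far (parent or offspring) was bad on the
  training set of its iteration.\<close>
definition rls_step :: "real \<Rightarrow> real \<Rightarrow> nat \<Rightarrow> nat \<Rightarrow> nat \<Rightarrow> (input \<Rightarrow> bool)
    \<Rightarrow> program \<times> bool \<Rightarrow> (program \<times> bool) pmf" where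
  "rls_step c c' n s lmt h st =
     (case st of (X, bad) \<Rightarrow>
       do { T \<leftarrow> training_set n s;
            X' \<leftarrow> hvl_prime n X;
            let bad' = (bad \<or> bad_sol c c' n h T X \<or> bad_sol c c' n h T X');
            let Xnew = (if LeafCount X' \<le> lmt \<and> sampled_error h T X' \<le> sampled_error h T X
                        then X' else X);
            return_pmf (Xnew, bad') })"

definition rls_run :: "real \<Rightarrow> real \<Rightarrow> nat \<Rightarrow> nat \<Rightarrow> nat \<Rightarrow> (input \<Rightarrow> bool) \<Rightarrow> nat
    \<Rightarrow> (program \<times> bool) pmf" where
  "rls_run c c' n s lmt h t =
     ((\<lambda>p. bind_pmf p (rls_step c c' n s lmt h)) ^^ t) (return_pmf (None, False))"

end

theory Submission
  imports Defs "HOL-Real_Asymp.Real_Asymp"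
begin

lemma sum_lists_prod:
  assumes "finite A"
  shows "(\<Sum>xs\<in>{xs. set xs \<subseteq> A \<and> length xs = k}. prod_list (map f xs)) = (sum f A :: real) ^ k"
proof (induction k)
  case 0
  have "{xs. set xs \<subseteq> A \<and> length xs = 0} = {[]}" by auto
  then show ?case by simp
next
  case (Suc k)
  let ?S = "{xs. set xs \<subseteq> A \<and> length xs = k}"
  have inj: "inj_on (\<lambda>(xs, n). n#xs) (?S \<times> A)" by (auto simp: inj_on_def)
  have "(\<Sum>xs\<in>{xs. set xs \<subseteq> A \<and> length xs = Suc k}. prod_list (map f xs))
      = (\<Sum>p\<in>?S \<times> A. prod_list (map f ((\<lambda>(xs, n). n#xs) p)))"
    unfolding lists_length_Suc_eq by (subst sum.reindex[OF inj]) (simp add: comp_def)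
  also have "\<dots> = (\<Sum>xs\<in>?S. \<Sum>a\<in>A. f a * prod_list (map f xs))"
    by (simp add: sum.cartesian_product case_prod_unfold)
  also have "\<dots> = (\<Sum>xs\<in>?S. prod_list (map f xs)) * sum f A"
    by (simp add: sum_distrib_right sum_distrib_left mult.commute)
  finally show ?case using Suc by simp
qed

lemma prod_list_half:
  "prod_list (map (\<lambda>x. if P x then 1/2 else (1::real)) T) = (1/2) ^ length (filter P T)"
  by (induction T) auto

lemma bind_bound:
  assumes "\<And>x. x \<in> set_pmf M \<Longrightarrow> measure_pmf.prob (N x) A \<le> indicator B x + a" and "a \<ge> 0"
  shows "measure_pmf.prob (bind_pmf M N) A \<le> measure_pmf.prob M B + a"
proof -
  have "emeasure (measure_pmf (bind_pmf M N)) A = (\<integral>\<^sup>+x. emeasure (N x) A \<partial>M)" by simp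
  also have "\<dots> \<le> (\<integral>\<^sup>+x. (ennreal (indicator B x) + ennreal a) \<partial>M)"
    apply (rule nn_integral_mono_AE)
    using assms by (auto simp: AE_measure_pmf_iff measure_pmf.emeasure_eq_measure ennreal_plus[symmetric]
       simp del: ennreal_plus)
  also have "\<dots> = emeasure M B + ennreal a"
    by (subst nn_integral_add) (auto simp: measure_pmf.emeasure_space_1 ennreal_indicator)
  finally have "ennreal (measure_pmf.prob (bind_pmf M N) A) \<le> ennreal (measure_pmf.prob M B + a)"
    using assms(2) by (simp add: measure_pmf.emeasure_eq_measure ennreal_plus[symmetric] del: ennreal_plus)
  then show ?thesis using assms(2)
    by (metis ennreal_le_iff ennreal_plus measure_nonneg add_nonneg_nonneg)
qed

lemma inputs_eq: "inputs n = {xs. set xs \<subseteq> (UNIV::bool set) \<and> length xs = n}"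
  by (auto simp: inputs_def)

lemma finite_inputs: "finite (inputs n)"
  unfolding inputs_eq by (rule finite_lists_length_eq) simp

lemma card_inputs: "card (inputs n) = 2 ^ n"
  unfolding inputs_eq by (subst card_lists_length_eq) auto

lemma key:
  fixes h :: "input \<Rightarrow> bool" and X :: program and m :: real
  shows "measure_pmf.prob (training_set n s) {T. real (sampled_error h T X) \<le> m}
        \<le> 2 powr m * (1 - gen_error n h X / 2) ^ s"
proof -
  define A where "A = inputs n"
  define S where "S = {T. set T \<subseteq> A \<and> length T = s}"
  define E where "E = {T. real (sampled_error h T X) \<le> m}"
  define P where "P = (\<lambda>x. eval_prog X x \<noteq> Some (h x))"
  define f where "f = (\<lambda>x. if P x then 1/2 else (1::real))"
  define B where "B = {x \<in> A. P x}"
  have finA: "finite A" unfolding A_def by (rule finite_inputs)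
  have cardA: "card A = 2 ^ n" unfolding A_def by (rule card_inputs)
  have finS: "finite S" unfolding S_def using finA by (rule finite_lists_length_eq)
  have cardS: "card S = (2 ^ n) ^ s" unfolding S_def using finA cardA by (simp add: card_lists_length_eq)
  have ts: "training_set n s = pmf_of_set S"
    unfolding training_set_def S_def A_def by (rule arg_cong[where f=pmf_of_set]) auto
  have Sne: "S \<noteq> {}"
  proof -
    have "replicate s (replicate n False) \<in> S" unfolding S_def A_def inputs_def by auto
    then show ?thesis by auto
  qed
  have prob: "measure_pmf.prob (training_set n s) E = card (S \<inter> E) / card S"
    unfolding ts using finS Sne by (simp add: measure_pmf_of_set)
  have pl: "prod_list (map f T) = (1/2) ^ sampled_error h T X" for T
    unfolding f_def sampled_error_def P_def by (rule prod_list_half)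
  have "real (card (S \<inter> E)) = (\<Sum>T\<in>S \<inter> E. 1)" by simp
  also have "\<dots> \<le> (\<Sum>T\<in>S \<inter> E. 2 powr m * prod_list (map f T))"
  proof (rule sum_mono)
    fix T assume "T \<in> S \<inter> E"
    then have le: "real (sampled_error h T X) \<le> m" by (auto simp: E_def)
    have "2 powr m * prod_list (map f T) = 2 powr m * 2 powr (- real (sampled_error h T X))"
      by (simp add: pl powr_minus_divide powr_realpow power_one_over)
    also have "\<dots> = 2 powr (m - real (sampled_error h T X))"
      by (simp add: powr_add[symmetric])
    also have "\<dots> \<ge> 1" using le by (simp add: ge_one_powr_ge_zero)
    finally show "1 \<le> 2 powr m * prod_list (map f T)" .
  qed
  also have "\<dots> \<le> (\<Sum>T\<in>S. 2 powr m * prod_list (map f T))"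
    by (rule sum_mono2) (auto simp: finS pl)
  also have "\<dots> = 2 powr m * (sum f A) ^ s"
    unfolding S_def by (simp add: sum_distrib_left[symmetric] sum_lists_prod[OF finA])
  finally have c: "real (card (S \<inter> E)) \<le> 2 powr m * (sum f A) ^ s" .
  have sf: "sum f A = card A - card B / 2"
  proof -
    have "sum f A = (\<Sum>x\<in>A. 1 - (if P x then 1/2 else 0))"
      unfolding f_def by (rule sum.cong) auto
    also have "\<dots> = card A - (\<Sum>x\<in>A. if P x then 1/2 else 0)"
      by (simp add: sum_subtractf)
    also have "(\<Sum>x\<in>A. if P x then 1/2 else (0::real)) = card B / 2"
      unfolding B_def using finA by (simp add: sum.inter_filter[symmetric])
    finally show ?thesis .
  qed
  have ge: "gen_error n h X = card B / 2 ^ n"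
    unfolding gen_error_def B_def A_def P_def by simp
  have "measure_pmf.prob (training_set n s) E \<le> 2 powr m * (sum f A) ^ s / card S"
    unfolding prob by (rule divide_right_mono[OF c]) simp
  also have "\<dots> = 2 powr m * (sum f A / 2 ^ n) ^ s"
    by (simp add: cardS power_divide power_mult)
  also have "sum f A / 2 ^ n = 1 - gen_error n h X / 2"
    unfolding sf ge cardA by (simp add: field_simps)
  finally show ?thesis unfolding E_def .
qed

lemma gen_error_le1: "gen_error n h X \<le> 1"
proof -
  have "card {x \<in> inputs n. eval_prog X x \<noteq> Some (h x)} \<le> card (inputs n)"
    by (rule card_mono[OF finite_inputs]) auto
  then show ?thesis unfolding gen_error_def card_inputs by simp
qed

lemma eps_bound:
  assumes n: "n \<ge> 2" and s: "real s \<ge> real n powr c * (log 2 (real n))\<^sup>2"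
  shows "measure_pmf.prob (training_set n s) {T. bad_sol c c' n h T X}
           \<le> real n powr c' * exp (-(log 2 (real n))\<^sup>2 / 2)"
proof (cases "gen_error n h X > real n powr (- c)")
  case False
  then have "{T. bad_sol c c' n h T X} = {}" by (auto simp: bad_sol_def)
  then show ?thesis by simp
next
  case True
  define g where "g = gen_error n h X"
  define L where "L = log 2 (real n)"
  have npos: "real n > 0" using n by simp
  have g0: "0 \<le> gen_error n h X" unfolding gen_error_def by simp
  have "measure_pmf.prob (training_set n s) {T. bad_sol c c' n h T X}
        \<le> measure_pmf.prob (training_set n s) {T. real (sampled_error h T X) \<le> c' * L}"
    by (rule measure_pmf.finite_measure_mono) (auto simp: bad_sol_def L_def)
  also have "\<dots> \<le> 2 powr (c' * L) * (1 - g / 2) ^ s" unfolding g_def by (rule key)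
  also have "2 powr (c' * L) = real n powr c'"
  proof -
    have "2 powr (c' * L) = (2 powr L) powr c'" by (simp add: powr_powr mult.commute)
    also have "2 powr L = real n" unfolding L_def using npos by simp
    finally show ?thesis .
  qed
  also have "(1 - g / 2) ^ s \<le> exp (- L\<^sup>2 / 2)"
  proof -
    have g1: "g \<le> 1" unfolding g_def by (rule gen_error_le1)
    have "(1 - g / 2) ^ s \<le> exp (- g / 2) ^ s"
      by (rule power_mono) (use g1 exp_ge_add_one_self[of "- g / 2"] in auto)
    also have "\<dots> = exp (- g * s / 2)" by (simp add: exp_of_nat_mult[symmetric] mult.commute)
    also have "\<dots> \<le> exp (- L\<^sup>2 / 2)"
    proof -
      have "g * s \<ge> real n powr (- c) * (real n powr c * L\<^sup>2)"
        apply (rule mult_mono) using True s g0 by (auto simp: g_def L_def)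
      also have "real n powr (- c) * (real n powr c * L\<^sup>2) = L\<^sup>2"
        using npos by (simp add: powr_minus field_simps)
      finally show ?thesis by simp
    qed
    finally show ?thesis .
  qed
  finally show ?thesis unfolding L_def by (simp add: mult_left_mono)
qed

lemma pair_pmf_alt: "pair_pmf A B = bind_pmf B (\<lambda>y. map_pmf (\<lambda>x. (x, y)) A)"
  unfolding pair_pmf_def map_pmf_def by (subst bind_commute_pmf) simp

lemma pair_bound:
  assumes "\<And>y. measure_pmf.prob A {x. Q x y} \<le> e" and "e \<ge> 0"
  shows "measure_pmf.prob (pair_pmf A B) {p. Q (fst p) (snd p)} \<le> e"
proof -
  have "measure_pmf.prob (bind_pmf B (\<lambda>y. map_pmf (\<lambda>x. (x, y)) A)) {p. Q (fst p) (snd p)}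
        \<le> measure_pmf.prob B {} + e"
    by (rule bind_bound) (use assms in \<open>auto simp: vimage_def\<close>)
  then show ?thesis by (simp add: pair_pmf_alt)
qed

lemma step_eq:
  "rls_step c c' n s lmt h (X, False) =
   map_pmf (\<lambda>(T, X'). ((if LeafCount X' \<le> lmt \<and> sampled_error h T X' \<le> sampled_error h T X
                        then X' else X), bad_sol c c' n h T X \<or> bad_sol c c' n h T X'))
     (pair_pmf (training_set n s) (hvl_prime n X))"
  unfolding rls_step_def pair_pmf_def by (simp add: map_bind_pmf Let_def)

lemma step_bound:
  assumes eps: "\<And>X. measure_pmf.prob (training_set n s) {T. bad_sol c c' n h T X} \<le> e"
  shows "measure_pmf.prob (rls_step c c' n s lmt h st) {st. snd st}
           \<le> indicator {st. snd st} st + 2 * e"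
proof -
  have e0: "e \<ge> 0" using eps[of None] measure_nonneg[of _ "{T. bad_sol c c' n h T None}"]
    by (meson order_trans)
  obtain X b where st: "st = (X, b)" by (cases st)
  show ?thesis
  proof (cases b)
    case True
    have "measure_pmf.prob (rls_step c c' n s lmt h st) {st. snd st} \<le> 1"
      by (rule measure_pmf.prob_le_1)
    moreover have "indicator {st. snd st} st = (1::real)" using st True by (simp add: indicator_def)
    ultimately show ?thesis using e0 by linarith
  next
    case False
    let ?P = "pair_pmf (training_set n s) (hvl_prime n X)"
    have "measure_pmf.prob (rls_step c c' n s lmt h st) {st. snd st}
        = measure_pmf.prob ?P ({p. bad_sol c c' n h (fst p) X} \<union> {p. bad_sol c c' n h (fst p) (snd p)})"
      using False unfolding st by (simp only: step_eq[of c c' n s lmt h X] simp_thms(2)) (simp add: vimage_def case_prod_unfold Un_def)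
    also have "\<dots> \<le> measure_pmf.prob ?P {p. bad_sol c c' n h (fst p) X}
                    + measure_pmf.prob ?P {p. bad_sol c c' n h (fst p) (snd p)}"
      by (rule measure_Un_le) auto
    also have "measure_pmf.prob ?P {p. bad_sol c c' n h (fst p) X} \<le> e"
      by (rule pair_bound[OF eps e0])
    also have "measure_pmf.prob ?P {p. bad_sol c c' n h (fst p) (snd p)} \<le> e"
      by (rule pair_bound[OF eps e0])
    finally show ?thesis using st False by simp
  qed
qed

lemma run_bound:
  assumes eps: "\<And>X. measure_pmf.prob (training_set n s) {T. bad_sol c c' n h T X} \<le> e"
  shows "measure_pmf.prob (rls_run c c' n s lmt h t) {st. snd st} \<le> 2 * real t * e"
proof (induction t)
  case 0
  then show ?case by (simp add: rls_run_def)
next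
  case (Suc t)
  have "measure_pmf.prob (rls_run c c' n s lmt h (Suc t)) {st. snd st}
      = measure_pmf.prob (bind_pmf (rls_run c c' n s lmt h t) (rls_step c c' n s lmt h)) {st. snd st}"
    by (simp add: rls_run_def)
  also have "\<dots> \<le> measure_pmf.prob (rls_run c c' n s lmt h t) {st. snd st} + 2 * e"
  proof (rule bind_bound)
    show "0 \<le> 2 * e" using eps[of None] measure_nonneg[of _ "{T. bad_sol c c' n h T None}"]
      by (meson order_trans zero_le_mult_iff zero_le_numeral)
  qed (rule step_bound[OF eps])
  also have "\<dots> \<le> 2 * real (Suc t) * e" using Suc by (simp add: algebra_simps)
  finally show ?case .
qed

theorem lemma11:
  fixes c c' :: real and lmt s :: "nat \<Rightarrow> nat" and hf :: "nat \<Rightarrow> func" and k :: nat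
  assumes "c > 0" and "c' > 0"
    and "\<And>n. lmt n \<ge> n"
    and "\<And>n. real (s n) \<ge> real n powr c * (log 2 (real n))\<^sup>2"
  shows "(\<lambda>n. measure_pmf.prob
                (rls_run c c' n (s n) (lmt n) (target (hf n) n) (n ^ k)) {st. snd st})
           \<longlonglongrightarrow> 0"
proof (rule tendsto_sandwich[where f="\<lambda>_. 0"])
  show "\<forall>\<^sub>F n in sequentially. 0 \<le> measure_pmf.prob
                (rls_run c c' n (s n) (lmt n) (target (hf n) n) (n ^ k)) {st. snd st}"
    by simp
  show "\<forall>\<^sub>F n in sequentially. measure_pmf.prob
                (rls_run c c' n (s n) (lmt n) (target (hf n) n) (n ^ k)) {st. snd st}
        \<le> 2 * real (n ^ k) * (real n powr c' * exp (-(log 2 (real n))\<^sup>2 / 2))"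
    using eventually_ge_at_top[of "2::nat"]
  proof eventually_elim
    case (elim n)
    show ?case
      by (rule run_bound) (rule eps_bound[OF elim assms(4)])
  qed
  show "(\<lambda>_. 0::real) \<longlonglongrightarrow> 0" by simp
  show "(\<lambda>n. 2 * real (n ^ k) * (real n powr c' * exp (-(log 2 (real n))\<^sup>2 / 2))) \<longlonglongrightarrow> 0"
    by real_asymp
qed

end
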